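(* Let $n,m\in\mathbb{N}$, $p\in(0,1]$, and let $f$ be a score function single-peaked at $p$. Let $\eta\in\mathbb{N}$. If there exists a set of static documents $T\subseteq D$ with $|T|=\eta$ such that the corpus-enriched game $G_T=\langle n,m,p,T\rangle$ has a pure equilibrium, then there exists a threshold vector $\vec t\in[0,1]^m$ with $\|\vec t\|_1=\sum_{j=1}^m \vec t_j\le \eta$ such that the ranking game with thresholds $G_{\vec t}=\langle n,m,p,\vec t\rangle$ has a pure equilibrium.
   Context: Setting: $n$ players (publishers), $m$ queries $q_1,\dots,q_m$, a peak value $p\in(0,1]$ and a score function $f:[0,1]\to[0,1]$ single-peaked at $p$ ($p$ is the unique point such that $f$ is non-decreasing on $[0,p]$ and non-increasing on $[p,1]$). Each player $i$ chooses a document $d_i\in D=\{d=(d^1,\dots,d^m)\in[0,1]^m:\sum_j d^j\le 1\}$; its score for $q_j$ is $f(d_i^j)$. A strategy profile is $s=(d_1,\dots,d_n)$. Each winner of a query shares it uniformly: if $q_j$ has $h_j$ winners each gets $1/h_j$; a player's utility is the sum of its shares over queries. Corpus-enriched game $G_T=\langle n,m,p,T\rangle$: $T\subseteq D$ is a finite set of static (dummy) documents; a player's document can be top-ranked for $q_j$ only if its score is at least $\max_{d\in T}f(d^j)$ (ties with static documents are broken in favour of players); among such player documents, those of highest score are the winners of $q_j$; if none, no player wins $q_j$. Ranking game with thresholds $G_{\vec t}=\langle n,m,p,\vec t\rangle$, $\vec t\in[0,1]^m$: player $i$'s document is eligible for $q_j$ iff $d_i^j\ge\vec t_j$; among eligible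 player documents those of highest score win $q_j$ (uniform sharing); if none is eligible, no player wins $q_j$. In either game, a pure equilibrium is a pure Nash equilibrium (no player can strictly increase her utility by unilaterally changing her document) in which every query is won by at least one player. *)

theory Defs
  imports Complex_Main
begin

text \<open>Queries are indexed by j < m, players by i < n. A document is a function
  nat => real; it lives in D when its first m coordinates are in [0,1] with sum at most 1
  and all other coordinates are 0.\<close>

definition docs :: "nat \<Rightarrow> (nat \<Rightarrow> real) set" where
  "docs m = {d. (\<forall>j<m. 0 \<le> d j \<and> d j \<le> 1) \<and> (\<forall>j\<ge>m. d j = 0) \<and> (\<Sum>j<m. d j) \<le> 1}"

definition single_peaked :: "(real \<Rightarrow> real) \<Rightarrow> real \<Rightarrow> bool" where
  "single_peaked f p \<longleftrightarrow>
     f ` {0..1} \<subseteq> {0..1} \<and>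
     p \<in> {0..1} \<and> mono_on {0..p} f \<and> antimono_on {p..1} f \<and>
     (\<forall>q\<in>{0..1}. mono_on {0..q} f \<and> antimono_on {q..1} f \<longrightarrow> q = p)"

definition winners ::
  "nat \<Rightarrow> (real \<Rightarrow> real) \<Rightarrow> ((nat \<Rightarrow> real) \<Rightarrow> nat \<Rightarrow> bool) \<Rightarrow> (nat \<Rightarrow> nat \<Rightarrow> real) \<Rightarrow> nat \<Rightarrow> nat set" where
  "winners n f elig s j =
     {i. i < n \<and> elig (s i) j \<and> (\<forall>k<n. elig (s k) j \<longrightarrow> f (s k j) \<le> f (s i j))}"

definition utility ::
  "nat \<Rightarrow> nat \<Rightarrow> (real \<Rightarrow> real) \<Rightarrow> ((nat \<Rightarrow> real) \<Rightarrow> nat \<Rightarrow> bool) \<Rightarrow> (nat \<Rightarrow> nat \<Rightarrow> real) \<Rightarrow> nat \<Rightarrow> real" where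
  "utility n m f elig s i =
     (\<Sum>j<m. if i \<in> winners n f elig s j then 1 / real (card (winners n f elig s j)) else 0)"

definition pure_equilibrium ::
  "nat \<Rightarrow> nat \<Rightarrow> (real \<Rightarrow> real) \<Rightarrow> ((nat \<Rightarrow> real) \<Rightarrow> nat \<Rightarrow> bool) \<Rightarrow> (nat \<Rightarrow> nat \<Rightarrow> real) \<Rightarrow> bool" where
  "pure_equilibrium n m f elig s \<longleftrightarrow>
     (\<forall>i<n. s i \<in> docs m) \<and>
     (\<forall>i<n. \<forall>d\<in>docs m. utility n m f elig (s(i := d)) i \<le> utility n m f elig s i) \<and>
     (\<forall>j<m. winners n f elig s j \<noteq> {})"

text \<open>Corpus-enriched game G_T: a player document is eligible for q_j iff its score is at
  least the score of every static document (ties favour players).\<close>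

definition corpus_elig :: "(real \<Rightarrow> real) \<Rightarrow> (nat \<Rightarrow> real) set \<Rightarrow> (nat \<Rightarrow> real) \<Rightarrow> nat \<Rightarrow> bool" where
  "corpus_elig f T d j \<longleftrightarrow> (\<forall>e\<in>T. f (e j) \<le> f (d j))"

definition corpus_game_has_pure_eq :: "nat \<Rightarrow> nat \<Rightarrow> (real \<Rightarrow> real) \<Rightarrow> (nat \<Rightarrow> real) set \<Rightarrow> bool" where
  "corpus_game_has_pure_eq n m f T \<longleftrightarrow> (\<exists>s. pure_equilibrium n m f (corpus_elig f T) s)"

definition thresh_elig :: "(nat \<Rightarrow> real) \<Rightarrow> (nat \<Rightarrow> real) \<Rightarrow> nat \<Rightarrow> bool" where
  "thresh_elig t d j \<longleftrightarrow> t j \<le> d j"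

definition threshold_game_has_pure_eq :: "nat \<Rightarrow> nat \<Rightarrow> (real \<Rightarrow> real) \<Rightarrow> (nat \<Rightarrow> real) \<Rightarrow> bool" where
  "threshold_game_has_pure_eq n m f t \<longleftrightarrow> (\<exists>s. pure_equilibrium n m f (thresh_elig t) s)"

end

theory Submission
  imports Defs
begin

lemma fmax_lemma:
  assumes "single_peaked f p" and "x \<in> {0..1}"
  shows "f x \<le> f p"
proof -
  have sp: "p \<in> {0..1}" "mono_on {0..p} f" "antimono_on {p..1} f"
    using assms(1) unfolding single_peaked_def by auto
  show ?thesis
  proof (cases "x \<le> p")
    case True
    then show ?thesis using sp assms(2) by (auto intro: mono_onD)
  next
    case False
    then show ?thesis using sp(3) sp(1) assms(2) unfolding monotone_on_def by auto
  qed
qed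

lemma winners_eq_at_s:
  assumes P2: "\<forall>k<n. corpus_elig f T (s k) j \<longrightarrow> t j \<le> s k j"
    and ne: "winners n f (corpus_elig f T) s j \<noteq> {}"
  shows "winners n f (thresh_elig t) s j = winners n f (corpus_elig f T) s j"
proof -
  obtain w where w: "w \<in> winners n f (corpus_elig f T) s j" using ne by blast
  have wT: "w < n" "corpus_elig f T (s w) j"
    "\<forall>k<n. corpus_elig f T (s k) j \<longrightarrow> f (s k j) \<le> f (s w j)"
    using w unfolding winners_def by auto
  have up: "corpus_elig f T (s k) j" if "k < n" "f (s w j) \<le> f (s k j)" for k
    using wT(2) that(2) unfolding corpus_elig_def by force
  have tT: "thresh_elig t (s k) j" if "k < n" "corpus_elig f T (s k) j" for k
    using P2 that unfolding thresh_elig_def by auto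
  have maxt: "f (s k j) \<le> f (s w j)" if "k < n" "thresh_elig t (s k) j" for k
  proof (rule ccontr)
    assume nt: "\<not> f (s k j) \<le> f (s w j)"
    then have "f (s w j) \<le> f (s k j)" by simp
    then have "corpus_elig f T (s k) j" using up that by blast
    then show False using wT(3) that nt by blast
  qed
  show ?thesis
  proof (intro set_eqI iffI)
    fix x assume x: "x \<in> winners n f (thresh_elig t) s j"
    have "f (s w j) \<le> f (s x j)" using x wT tT unfolding winners_def by auto
    moreover have "x < n" using x unfolding winners_def by auto
    ultimately have "corpus_elig f T (s x) j" using up by blast
    then show "x \<in> winners n f (corpus_elig f T) s j"
      using x \<open>x<n\<close> \<open>f (s w j) \<le> f (s x j)\<close> wT(3) unfolding winners_def
      by (auto intro: order_trans)
  next
    fix x assume x: "x \<in> winners n f (corpus_elig f T) s j"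
    then have xx: "x < n" "corpus_elig f T (s x) j" "f (s w j) \<le> f (s x j)"
      using wT unfolding winners_def by auto
    show "x \<in> winners n f (thresh_elig t) s j"
      unfolding winners_def using xx tT maxt by (auto intro: order_trans)
  qed
qed

lemma claim:
  assumes p: "0 < p" and fmax: "\<forall>x\<in>{0..1}. f x \<le> f p" and fmono: "mono_on {0..p} f"
    and P0: "0 \<le> t j" "t j \<le> p"
    and P1: "\<forall>e\<in>T. f (e j) \<le> f (t j)"
    and P2: "\<forall>k<n. corpus_elig f T (s k) j \<longrightarrow> t j \<le> s k j"
    and T: "\<forall>e\<in>T. 0 \<le> e j \<and> e j \<le> 1"
    and d: "0 \<le> d j" "d j \<le> 1"
    and i: "i < n"
    and win: "i \<in> winners n f (thresh_elig t) (s(i := d)) j"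
    and d'def: "d' j = min (d j) p"
  shows "i \<in> winners n f (corpus_elig f T) (s(i := d')) j \<and>
         winners n f (corpus_elig f T) (s(i := d')) j \<subseteq> winners n f (thresh_elig t) (s(i := d)) j"
proof -
  have dt: "t j \<le> d j" using win unfolding winners_def thresh_elig_def by auto
  have dom: "\<And>k. k < n \<Longrightarrow> thresh_elig t ((s(i := d)) k) j \<Longrightarrow> f ((s(i := d)) k j) \<le> f (d j)"
    using win unfolding winners_def by auto
  have fx: "f (d j) \<le> f (d' j)"
  proof (cases "d j \<le> p")
    case True then show ?thesis using d'def by simp
  next
    case False then show ?thesis using d'def fmax d by simp
  qed
  have eligi: "corpus_elig f T d' j"
    unfolding corpus_elig_def
  proof
    fix e assume e: "e \<in> T"
    show "f (e j) \<le> f (d' j)"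
    proof (cases "d j \<le> p")
      case True
      have "f (t j) \<le> f (d j)" using fmono P0 dt True by (auto intro: mono_onD)
      then show ?thesis using P1 e d'def True by force
    next
      case False then show ?thesis using d'def fmax T e by simp
    qed
  qed
  have others: "f (s k j) \<le> f (d' j)" "thresh_elig t (s k) j"
    if "k < n" "k \<noteq> i" "corpus_elig f T (s k) j" for k
  proof -
    show "thresh_elig t (s k) j" using P2 that unfolding thresh_elig_def by auto
    then have "f (s k j) \<le> f (d j)" using dom[of k] that by simp
    then show "f (s k j) \<le> f (d' j)" using fx by simp
  qed
  have A: "i \<in> winners n f (corpus_elig f T) (s(i := d')) j"
    unfolding winners_def using i eligi others by auto
  have B: "winners n f (corpus_elig f T) (s(i := d')) j \<subseteq> winners n f (thresh_elig t) (s(i := d)) j"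
  proof
    fix k assume k: "k \<in> winners n f (corpus_elig f T) (s(i := d')) j"
    show "k \<in> winners n f (thresh_elig t) (s(i := d)) j"
    proof (cases "k = i")
      case True then show ?thesis using win by simp
    next
      case False
      have kk: "k < n" "corpus_elig f T (s k) j" "f (d' j) \<le> f (s k j)"
        using k False i eligi unfolding winners_def by auto
      have te: "thresh_elig t (s k) j" using others kk False by auto
      have "f (s k j) \<le> f (d j)" using dom[of k] te kk False by simp
      then have "f (s k j) = f (d j)" using kk fx by simp
      then show ?thesis using kk False others dom unfolding winners_def by auto
    qed
  qed
  show ?thesis using A B by blast
qed

lemma transfer:
  assumes p: "0 < p" "p \<le> 1" and sp: "single_peaked f p"
    and eq: "pure_equilibrium n m f (corpus_elig f T) s"
    and T: "T \<subseteq> docs m"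
    and P0: "\<forall>j<m. 0 \<le> t j \<and> t j \<le> p"
    and P1: "\<forall>j<m. \<forall>e\<in>T. f (e j) \<le> f (t j)"
    and P2: "\<forall>j<m. \<forall>k<n. corpus_elig f T (s k) j \<longrightarrow> t j \<le> s k j"
  shows "pure_equilibrium n m f (thresh_elig t) s"
proof -
  have fmax: "\<forall>x\<in>{0..1}. f x \<le> f p" using fmax_lemma[OF sp] by blast
  have fmono: "mono_on {0..p} f" using sp unfolding single_peaked_def by auto
  have sdocs: "\<forall>i<n. s i \<in> docs m" and dev: "\<forall>i<n. \<forall>d\<in>docs m.
      utility n m f (corpus_elig f T) (s(i := d)) i \<le> utility n m f (corpus_elig f T) s i"
    and ne: "\<forall>j<m. winners n f (corpus_elig f T) s j \<noteq> {}"
    using eq unfolding pure_equilibrium_def by auto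
  have weq: "winners n f (thresh_elig t) s j = winners n f (corpus_elig f T) s j" if "j < m" for j
    using winners_eq_at_s[where n=n and f=f and T=T and s=s and t=t and j=j] P2 ne that by auto
  have ueq: "utility n m f (thresh_elig t) s i = utility n m f (corpus_elig f T) s i" for i
    unfolding utility_def using weq by (intro sum.cong) auto
  have Tj: "\<forall>e\<in>T. 0 \<le> e j \<and> e j \<le> 1" if "j < m" for j
    using T that unfolding docs_def by auto
  have devt: "utility n m f (thresh_elig t) (s(i := d)) i \<le> utility n m f (thresh_elig t) s i"
    if i: "i < n" and d: "d \<in> docs m" for i d
  proof -
    define d' where "d' = (\<lambda>j. min (d j) p)"
    have dd: "\<forall>j<m. 0 \<le> d j \<and> d j \<le> 1" "\<forall>j\<ge>m. d j = 0" "(\<Sum>j<m. d j) \<le> 1"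
      using d unfolding docs_def by auto
    have "(\<Sum>j<m. d' j) \<le> (\<Sum>j<m. d j)" unfolding d'_def by (intro sum_mono) auto
    then have d'docs: "d' \<in> docs m" using dd p unfolding docs_def d'_def by auto
    have tm: "(if i \<in> winners n f (thresh_elig t) (s(i := d)) j
               then 1 / real (card (winners n f (thresh_elig t) (s(i := d)) j)) else 0)
          \<le> (if i \<in> winners n f (corpus_elig f T) (s(i := d')) j
               then 1 / real (card (winners n f (corpus_elig f T) (s(i := d')) j)) else 0)"
      if j: "j < m" for j
    proof (cases "i \<in> winners n f (thresh_elig t) (s(i := d)) j")
      case True
      have c: "i \<in> winners n f (corpus_elig f T) (s(i := d')) j \<and>
         winners n f (corpus_elig f T) (s(i := d')) j \<subseteq> winners n f (thresh_elig t) (s(i := d)) j"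
        using claim[where p=p and f=f and t=t and j=j and T=T and n=n and s=s and d=d and i=i and d'=d']
          p fmax fmono P0 P1 P2 Tj[OF j] dd j i True d'_def
        by auto
      have fin: "finite (winners n f (thresh_elig t) (s(i := d)) j)"
        unfolding winners_def by auto
      have cle: "card (winners n f (corpus_elig f T) (s(i := d')) j)
          \<le> card (winners n f (thresh_elig t) (s(i := d)) j)"
        using c fin by (intro card_mono) auto
      have cpos: "0 < card (winners n f (corpus_elig f T) (s(i := d')) j)"
        using c fin by (metis card_gt_0_iff empty_iff finite_subset)
      have "1 / real (card (winners n f (thresh_elig t) (s(i := d)) j))
          \<le> 1 / real (card (winners n f (corpus_elig f T) (s(i := d')) j))"
        using cle cpos by (intro divide_left_mono) auto
      then show ?thesis using True c by simp
    next
      case False then show ?thesis by simp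
    qed
    have "utility n m f (thresh_elig t) (s(i := d)) i \<le> utility n m f (corpus_elig f T) (s(i := d')) i"
      unfolding utility_def by (intro sum_mono tm) auto
    also have "\<dots> \<le> utility n m f (corpus_elig f T) s i" using dev i d'docs by blast
    also have "\<dots> = utility n m f (thresh_elig t) s i" using ueq by simp
    finally show ?thesis .
  qed
  show ?thesis unfolding pure_equilibrium_def
    using sdocs devt ne weq by auto
qed


theorem lemma1:
  fixes n m \<eta> :: nat and p :: real and f :: "real \<Rightarrow> real"
  assumes "0 < p" and "p \<le> 1"
    and "single_peaked f p"
    and "\<exists>T. T \<subseteq> docs m \<and> finite T \<and> card T = \<eta> \<and> corpus_game_has_pure_eq n m f T"
  shows "\<exists>t :: nat \<Rightarrow> real. (\<forall>j<m. 0 \<le> t j \<and> t j \<le> 1) \<and> (\<forall>j\<ge>m. t j = 0) \<and>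
           (\<Sum>j<m. t j) \<le> real \<eta> \<and> threshold_game_has_pure_eq n m f t"
proof -
  obtain T s where T: "T \<subseteq> docs m" "finite T" "card T = \<eta>"
    and eq: "pure_equilibrium n m f (corpus_elig f T) s"
    using assms(4) unfolding corpus_game_has_pure_eq_def by blast
  have fmax: "\<forall>x\<in>{0..1}. f x \<le> f p" using fmax_lemma[OF assms(3)] by blast
  have sdocs: "\<forall>i<n. s i \<in> docs m" using eq unfolding pure_equilibrium_def by auto
  have Tj: "\<forall>e\<in>T. 0 \<le> e j \<and> e j \<le> 1" if "j < m" for j
    using T that unfolding docs_def by auto
  show ?thesis
  proof (cases "T = {}")
    case True
    define t :: "nat \<Rightarrow> real" where "t = (\<lambda>j. 0)"
    have "pure_equilibrium n m f (thresh_elig t) s"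
      apply (rule transfer[OF assms(1,2,3) eq T(1)])
      using assms(1) sdocs True unfolding t_def docs_def by auto
    then show ?thesis unfolding threshold_game_has_pure_eq_def t_def by auto
  next
    case False
    define S where "S j = {x. 0 \<le> x \<and> x \<le> p \<and> (\<forall>e\<in>T. f (e j) \<le> f x)}" for j
    define F where "F j = ((\<lambda>k. s k j) ` {..<n} \<union> (\<lambda>e. e j) ` T \<union> {p}) \<inter> S j" for j
    define t where "t j = (if j < m then Min (F j) else 0)" for j
    have finF: "finite (F j)" for j unfolding F_def using T(2) by auto
    have pF: "p \<in> F j" if "j < m" for j
      unfolding F_def S_def using assms(1) fmax Tj[OF that] by auto
    have tF: "t j \<in> F j" "\<And>x. x \<in> F j \<Longrightarrow> t j \<le> x" if "j < m" for j
      using finF[of j] pF[OF that] that unfolding t_def by (auto intro: Min_in)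
    have tS: "t j \<in> S j" if "j < m" for j using tF[OF that] unfolding F_def by auto
    have P0: "\<forall>j<m. 0 \<le> t j \<and> t j \<le> p" using tS unfolding S_def by auto
    have P1: "\<forall>j<m. \<forall>e\<in>T. f (e j) \<le> f (t j)" using tS unfolding S_def by auto
    have P2: "\<forall>j<m. \<forall>k<n. corpus_elig f T (s k) j \<longrightarrow> t j \<le> s k j"
    proof (intro allI impI)
      fix j k assume j: "j < m" and k: "k < n" and el: "corpus_elig f T (s k) j"
      show "t j \<le> s k j"
      proof (cases "s k j \<le> p")
        case True
        have "0 \<le> s k j" using sdocs k j unfolding docs_def by auto
        then have "s k j \<in> F j" unfolding F_def S_def using True k el
          unfolding corpus_elig_def by auto
        then show ?thesis using tF[OF j] by auto
      next
        case False then show ?thesis using P0 j by force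
      qed
    qed
    have tle: "t j \<le> (\<Sum>e\<in>T. e j)" if j: "j < m" for j
    proof -
      have "finite ((\<lambda>e. f (e j)) ` T)" "(\<lambda>e. f (e j)) ` T \<noteq> {}" using T(2) False by auto
      then have "Max ((\<lambda>e. f (e j)) ` T) \<in> (\<lambda>e. f (e j)) ` T" by (rule Max_in)
      then obtain e0 where e0: "e0 \<in> T" "f (e0 j) = Max ((\<lambda>e. f (e j)) ` T)" by auto
      have e0max: "\<forall>e\<in>T. f (e j) \<le> f (e0 j)" using e0(2) T(2) by auto
      have "t j \<le> e0 j"
      proof (cases "e0 j \<le> p")
        case True
        then have "e0 j \<in> F j" unfolding F_def S_def using e0 e0max Tj[OF j] by auto
        then show ?thesis using tF[OF j] by auto
      next
        case False then show ?thesis using P0 j by force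
      qed
      also have "e0 j \<le> (\<Sum>e\<in>T. e j)"
        using T(2) e0(1) Tj[OF j] by (intro member_le_sum) auto
      finally show ?thesis .
    qed
    have "(\<Sum>j<m. t j) \<le> (\<Sum>j<m. \<Sum>e\<in>T. e j)" using tle by (intro sum_mono) auto
    also have "\<dots> = (\<Sum>e\<in>T. \<Sum>j<m. e j)" by (rule sum.swap)
    also have "\<dots> \<le> (\<Sum>e\<in>T. 1)" using T(1) unfolding docs_def by (intro sum_mono) auto
    also have "\<dots> = real \<eta>" using T(3) by simp
    finally have P3: "(\<Sum>j<m. t j) \<le> real \<eta>" .
    have "pure_equilibrium n m f (thresh_elig t) s"
      by (rule transfer[OF assms(1,2,3) eq T(1) P0 P1 P2])
    moreover have "\<forall>j<m. 0 \<le> t j \<and> t j \<le> 1" using P0 assms(2) by force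
    moreover have "\<forall>j\<ge>m. t j = 0" unfolding t_def by auto
    ultimately show ?thesis unfolding threshold_game_has_pure_eq_def
      using P3 by blast
  qed
qed

end
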